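(* Let $a,b\in\mathbb{Q}_3$ with $\gamma(a)=\gamma(b)=0$ and $a_0=1$. Then $x=\sum_{k\ge0}x_k3^k\in\mathbb{Z}_3^*$ is a solution of $x^3+ax=b$ if and only if the congruences $$x_0^3+a_0x_0\equiv b_0 \pmod 3,$$ $$x_1a_0+x_0a_1+N_1(x_0)+M_1(x_0)\equiv b_1\pmod 3,$$ $$x_ka_0+x_{k-1}a_1+\dots+x_0a_k+x_0^2x_{k-1}+N_k(x_0,\dots,x_{k-1})+M_k(x_0,\dots,x_{k-1})\equiv b_k\pmod 3,\quad k\ge2,$$ are fulfilled, where the integers $M_k(x_0,\dots,x_{k-1})$ are defined successively by $$x_0^3+a_0x_0=b_0+3M_1(x_0),$$ $$x_1a_0+x_0a_1+N_1(x_0)=b_1-M_1(x_0)+3M_2(x_0,x_1),$$ $$x_{k-1}a_0+x_{k-2}a_1+\dots+x_0a_{k-1}+x_0^2x_{k-2}+N_{k-1}(x_0,\dots,x_{k-2})=b_{k-1}-M_{k-1}(x_0,\dots,x_{k-2})+3M_k(x_0,\dots,x_{k-1}),\quad k\ge3.$$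
   Context: Every nonzero $3$-adic number has a unique canonical form; write $a=3^{\gamma(a)}(a_0+a_13+a_23^2+\dots)$, $b=3^{\gamma(b)}(b_0+b_13+b_23^2+\dots)$ with digits $a_j,b_j\in\{0,1,2\}$, $a_0,b_0\ne0$, and $\gamma(a),\gamma(b)\in\mathbb{Z}$ the valuations. $\mathbb{Z}_3^*$ is the set of $3$-adic units; an element $x\in\mathbb{Z}_3^*$ is written $x=x_0+x_13+x_23^2+\dots$ with $x_j\in\{0,1,2\}$, $x_0\neq0$. For $k\ge1$, $$N_k(x_0,\dots,x_{k-1})=\sum \frac{3!}{m_0!m_1!\cdots m_{k-1}!}x_0^{m_0}x_1^{m_1}\cdots x_{k-1}^{m_{k-1}},$$ the sum over nonnegative integers $m_0,\dots,m_{k-1}$ with $\sum_{i=0}^{k-1}m_i=3$ and $\sum_{i=1}^{k-1}im_i=k$; in particular $N_1=0$. (These satisfy $(\sum_i x_i3^i)^3=x_0^3+\sum_{k\ge1}(3x_0^2x_k+N_k)3^k$.) *)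

theory Defs
  imports "HOL-Number_Theory.Cong"
begin

text \<open>A 3-adic number of valuation 0 (resp. a 3-adic unit) is represented by its canonical
digit sequence d :: nat => int with d j in {0,1,2} and d 0 \<noteq> 0.\<close>

definition digits3 :: "(nat \<Rightarrow> int) \<Rightarrow> bool" where
  "digits3 d \<longleftrightarrow> (\<forall>j. d j \<in> {0,1,2})"

definition unit_digits3 :: "(nat \<Rightarrow> int) \<Rightarrow> bool" where
  "unit_digits3 d \<longleftrightarrow> digits3 d \<and> d 0 \<noteq> 0"

text \<open>Truncation d_0 + d_1 3 + ... + d_{n-1} 3^{n-1}: the image in Z/3^n Z.\<close>
definition trunc3 :: "(nat \<Rightarrow> int) \<Rightarrow> nat \<Rightarrow> int" where
  "trunc3 d n = (\<Sum>i<n. d i * 3 ^ i)"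

text \<open>x^3 + a x = b holds in Z_3 = lim Z/3^n Z, i.e. modulo 3^n for every n.\<close>
definition cubic_solution3 :: "(nat \<Rightarrow> int) \<Rightarrow> (nat \<Rightarrow> int) \<Rightarrow> (nat \<Rightarrow> int) \<Rightarrow> bool" where
  "cubic_solution3 a b x \<longleftrightarrow>
     (\<forall>n. [trunc3 x n ^ 3 + trunc3 a n * trunc3 x n = trunc3 b n] (mod 3 ^ n))"

definition Nset :: "nat \<Rightarrow> (nat \<Rightarrow> nat) set" where
  "Nset k = {m. (\<forall>i\<ge>k. m i = 0) \<and> (\<Sum>i<k. m i) = 3 \<and> (\<Sum>i<k. i * m i) = k}"

definition Ncoef :: "nat \<Rightarrow> (nat \<Rightarrow> int) \<Rightarrow> int" where
  "Ncoef k x = (\<Sum>m\<in>Nset k.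
      (fact 3 div (\<Prod>i<k. fact (m i))) * (\<Prod>i<k. x i ^ m i))"

definition Lterm :: "(nat \<Rightarrow> int) \<Rightarrow> (nat \<Rightarrow> int) \<Rightarrow> nat \<Rightarrow> int" where
  "Lterm a x k = (\<Sum>i\<le>k. x (k - i) * a i)
       + (if k \<ge> 2 then x 0 ^ 2 * x (k - 1) else 0) + Ncoef k x"

text \<open>The integers M_k, defined successively (k \<ge> 1):
  x_0^3 + a_0 x_0 = b_0 + 3 M_1,
  Lterm_{k} + M_k = b_k + 3 M_{k+1}.
 The divisions are exact whenever the preceding congruences hold.\<close>
fun Mseq :: "(nat \<Rightarrow> int) \<Rightarrow> (nat \<Rightarrow> int) \<Rightarrow> (nat \<Rightarrow> int) \<Rightarrow> nat \<Rightarrow> int" where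
  "Mseq a b x 0 = 0"
| "Mseq a b x (Suc 0) = (x 0 ^ 3 + a 0 * x 0 - b 0) div 3"
| "Mseq a b x (Suc (Suc k)) =
     (Lterm a x (Suc k) + Mseq a b x (Suc k) - b (Suc k)) div 3"

end

theory Submission
  imports Defs "HOL-Combinatorics.Multiset_Permutations"
begin


lemma size_count_sum:
  "finite A \<Longrightarrow> set_mset M \<subseteq> A \<Longrightarrow> size M = (\<Sum>i\<in>A. count M i)"
proof (induction M)
  case empty then show ?case by simp
next
  case (add a M)
  have "(\<Sum>i\<in>A. count (add_mset a M) i) = (\<Sum>i\<in>A. count M i + (if i = a then 1 else 0))"
    by (intro sum.cong) auto
  also have "\<dots> = (\<Sum>i\<in>A. count M i) + 1" using add by (simp add: sum.distrib)
  finally show ?case using add by simp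
qed

lemma summset_count_sum:
  "finite A \<Longrightarrow> set_mset M \<subseteq> A \<Longrightarrow> sum_mset M = (\<Sum>i\<in>A. i * count M i)"
proof (induction M)
  case empty then show ?case by simp
next
  case (add a M)
  have "(\<Sum>i\<in>A. i * count (add_mset a M) i) = (\<Sum>i\<in>A. i * count M i + (if i = a then a else 0))"
    by (intro sum.cong) auto
  also have "\<dots> = (\<Sum>i\<in>A. i * count M i) + a" using add by (simp add: sum.distrib)
  finally show ?case using add by simp
qed

lemma prodmset_count_prod:
  fixes x :: "nat \<Rightarrow> int"
  shows "finite A \<Longrightarrow> set_mset M \<subseteq> A \<Longrightarrow> prod_mset (image_mset x M) = (\<Prod>i\<in>A. x i ^ count M i)"
proof (induction M)
  case empty then show ?case by simp
next
  case (add a M)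
  have "(\<Prod>i\<in>A. x i ^ count (add_mset a M) i) = (\<Prod>i\<in>A. x i ^ count M i * (if i = a then x a else 1))"
    by (intro prod.cong) auto
  also have "\<dots> = (\<Prod>i\<in>A. x i ^ count M i) * x a" using add by (simp add: prod.distrib)
  finally show ?case using add by simp
qed

lemma group_lists:
  fixes x :: "nat \<Rightarrow> int"
  assumes fin: "finite L" and closed: "\<And>xs ys. xs \<in> L \<Longrightarrow> mset ys = mset xs \<Longrightarrow> ys \<in> L"
  shows "(\<Sum>xs\<in>L. prod_list (map x xs)) =
     (\<Sum>M\<in>mset ` L. of_nat (card (permutations_of_multiset M)) * prod_mset (image_mset x M))"
proof -
  have "(\<Sum>xs\<in>L. prod_list (map x xs)) = (\<Sum>M\<in>mset ` L. \<Sum>xs\<in>{xs. xs \<in> L \<and> mset xs = M}. prod_list (map x xs))"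
    by (rule sum.image_gen[OF fin])
  also have "\<dots> = (\<Sum>M\<in>mset ` L. of_nat (card (permutations_of_multiset M)) * prod_mset (image_mset x M))"
  proof (rule sum.cong[OF refl])
    fix M assume "M \<in> mset ` L"
    then obtain zs where zs: "zs \<in> L" "M = mset zs" by auto
    have eq: "{xs. xs \<in> L \<and> mset xs = M} = permutations_of_multiset M"
      using zs closed by (auto simp: permutations_of_multiset_def)
    have "\<And>xs. xs \<in> permutations_of_multiset M \<Longrightarrow> prod_list (map x xs) = prod_mset (image_mset x M)"
      by (simp add: permutations_of_multiset_def flip: prod_mset_prod_list)
    then show "(\<Sum>xs\<in>{xs. xs \<in> L \<and> mset xs = M}. prod_list (map x xs)) =
       of_nat (card (permutations_of_multiset M)) * prod_mset (image_mset x M)"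
      unfolding eq by simp
  qed
  finally show ?thesis .
qed



definition Sl :: "nat \<Rightarrow> nat list set" where
  "Sl k = {xs. length xs = 3 \<and> sum_list xs = k \<and> set xs \<subseteq> {..<k}}"

lemma Sl_finite: "finite (Sl k)"
  by (rule finite_subset[OF _ finite_lists_length_eq[OF finite_lessThan, of k 3]]) (auto simp: Sl_def)

lemma mset_Sl: "mset ` Sl k = {M. size M = 3 \<and> sum_mset M = k \<and> set_mset M \<subseteq> {..<k}}"
proof
  show "mset ` Sl k \<subseteq> {M. size M = 3 \<and> sum_mset M = k \<and> set_mset M \<subseteq> {..<k}}"
    by (auto simp: Sl_def sum_mset_sum_list)
next
  show "{M. size M = 3 \<and> sum_mset M = k \<and> set_mset M \<subseteq> {..<k}} \<subseteq> mset ` Sl k"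
  proof
    fix M assume M: "M \<in> {M. size M = 3 \<and> sum_mset M = k \<and> set_mset M \<subseteq> {..<k}}"
    obtain xs where xs: "mset xs = M" using ex_mset by blast
    have "xs \<in> Sl k" using M xs unfolding Sl_def
      by (auto simp flip: sum_mset_sum_list)
    then show "M \<in> mset ` Sl k" using xs by blast
  qed
qed

lemma Ncoef_lists: "Ncoef k x = (\<Sum>xs\<in>Sl k. prod_list (map x xs))"
proof -
  let ?MS = "{M. size M = 3 \<and> sum_mset M = k \<and> set_mset M \<subseteq> {..<k}}"
  have "(\<Sum>xs\<in>Sl k. prod_list (map x xs)) =
     (\<Sum>M\<in>?MS. of_nat (card (permutations_of_multiset M)) * prod_mset (image_mset x M))"
    unfolding mset_Sl[symmetric]
    by (rule group_lists[OF Sl_finite]) (auto simp: Sl_def simp flip: sum_mset_sum_list dest: mset_eq_setD mset_eq_length)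
  also have "\<dots> = Ncoef k x"
    unfolding Ncoef_def
  proof (rule sym, rule sum.reindex_bij_witness[where i=count and j=Abs_multiset])
    fix m assume m: "m \<in> Nset k"
    have fin: "finite {i. 0 < m i}"
      by (rule finite_subset[of _ "{..<k}"]) (use m in \<open>auto simp: Nset_def not_less[symmetric]\<close>)
    show cnt: "count (Abs_multiset m) = m" using count_Abs_multiset[OF fin] .
    have sub: "set_mset (Abs_multiset m) \<subseteq> {..<k}"
      using m cnt by (auto simp: Nset_def set_mset_def) (metis not_le less_not_refl)
    have "size (Abs_multiset m) = 3" using size_count_sum[OF finite_lessThan sub] m cnt by (simp add: Nset_def)
    moreover have "sum_mset (Abs_multiset m) = k" using summset_count_sum[OF finite_lessThan sub] m cnt by (simp add: Nset_def)
    ultimately show "Abs_multiset m \<in> ?MS" using sub by simp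
    have sm: "set_mset (Abs_multiset m) = {i. 0 < m i}" using cnt by (simp add: set_mset_def)
    have p0: "(\<Prod>i<k. fact (m i) :: int) = (\<Prod>i\<in>{i. 0 < m i}. fact (m i))"
      by (rule prod.mono_neutral_right) (use sub sm in \<open>auto\<close>)
    have p1: "(\<Prod>i<k. fact (m i) :: int) = int (\<Prod>i\<in>set_mset (Abs_multiset m). fact (count (Abs_multiset m) i))"
      unfolding p0 of_nat_prod of_nat_fact cnt sm ..
    have p2: "(\<Prod>i<k. x i ^ m i) = prod_mset (image_mset x (Abs_multiset m))"
      using prodmset_count_prod[OF finite_lessThan sub, of x] cnt by simp
    show "int (card (permutations_of_multiset (Abs_multiset m))) * prod_mset (image_mset x (Abs_multiset m))
       = fact 3 div (\<Prod>i<k. fact (m i)) * (\<Prod>i<k. x i ^ m i)"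
      unfolding p1 p2 card_permutations_of_multiset(1) zdiv_int
      using \<open>size (Abs_multiset m) = 3\<close> by simp
  next
    fix M assume M: "M \<in> ?MS"
    show "Abs_multiset (count M) = M" by (simp add: count_inverse)
    have "size M = (\<Sum>i<k. count M i)" using size_count_sum[OF finite_lessThan] M by blast
    moreover have "sum_mset M = (\<Sum>i<k. i * count M i)" using summset_count_sum[OF finite_lessThan] M by blast
    moreover have "\<forall>i\<ge>k. count M i = 0" using M by (auto simp: not_in_iff[symmetric])
    ultimately show "count M \<in> Nset k" using M by (simp add: Nset_def)
  qed
  finally show ?thesis by simp
qed


definition conv :: "(nat \<Rightarrow> int) \<Rightarrow> (nat \<Rightarrow> int) \<Rightarrow> nat \<Rightarrow> int" where
  "conv f g k = (\<Sum>i\<le>k. f i * g (k - i))"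

lemma trunc_mult: "[trunc3 f n * trunc3 g n = trunc3 (conv f g) n] (mod 3 ^ n)"
proof -
  let ?h = "\<lambda>i j. f i * g j * 3 ^ (i + j)"
  let ?A = "{..<n} \<times> {..<n}"
  let ?P = "{(i,j). i + j < n}"
  have e1: "trunc3 f n * trunc3 g n = (\<Sum>(i,j)\<in>?A. ?h i j)"
    unfolding trunc3_def sum_product sum.cartesian_product by (simp add: power_add mult_ac)
  have sub: "?P \<subseteq> ?A" by auto
  have e2: "(\<Sum>(i,j)\<in>?A. ?h i j) = (\<Sum>(i,j)\<in>?A - ?P. ?h i j) + (\<Sum>(i,j)\<in>?P. ?h i j)"
    by (rule sum.subset_diff[OF sub]) simp
  have e3: "(\<Sum>(i,j)\<in>?P. ?h i j) = trunc3 (conv f g) n"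
    unfolding sum.triangle_reindex trunc3_def conv_def sum_distrib_right
    by (intro sum.cong refl) auto
  have e4: "(3::int) ^ n dvd (\<Sum>(i,j)\<in>?A - ?P. ?h i j)"
  proof (rule dvd_sum)
    fix p assume "p \<in> ?A - ?P"
    then obtain i j where p: "p = (i,j)" "\<not> i + j < n" by auto
    have "(3::int) ^ n dvd 3 ^ (i + j)" using p by (intro le_imp_power_dvd) simp
    then show "(3::int) ^ n dvd (case p of (i,j) \<Rightarrow> ?h i j)" using p by simp
  qed
  show ?thesis unfolding cong_iff_dvd_diff e1 e2 e3 using e4 by simp
qed

lemma len3: "length xs = 3 \<longleftrightarrow> (\<exists>p q r. xs = [p,q,r])"
  by (auto simp: numeral_3_eq_3 length_Suc_conv)

lemma conv3_lists: "conv (conv x x) x k = (\<Sum>xs\<in>{xs. length xs = 3 \<and> sum_list xs = k}. prod_list (map x xs))"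
proof -
  have "conv (conv x x) x k = (\<Sum>(s,i)\<in>Sigma {..k} (\<lambda>s. {..s}). x i * x (s - i) * x (k - s))"
    unfolding conv_def sum_distrib_right by (rule sum.Sigma) auto
  also have "\<dots> = (\<Sum>xs\<in>{xs. length xs = 3 \<and> sum_list xs = k}. prod_list (map x xs))"
    by (rule sum.reindex_bij_witness[where i="\<lambda>xs. (xs!0 + xs!1, xs!0)" and j="\<lambda>(s,i). [i, s - i, k - s]"])
       (auto simp: len3)
  finally show ?thesis .
qed

lemma conv3_Ncoef:
  assumes "k \<ge> 1"
  shows "conv (conv x x) x k = Ncoef k x + 3 * x 0 ^ 2 * x k"
proof -
  have eq: "{xs. length xs = 3 \<and> sum_list xs = k} = Sl k \<union> {[k,0,0],[0,k,0],[0,0,k]}"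
  proof
    show "{xs. length xs = 3 \<and> sum_list xs = k} \<subseteq> Sl k \<union> {[k,0,0],[0,k,0],[0,0,k]}"
    proof
      fix b assume "b \<in> {xs. length xs = 3 \<and> sum_list xs = k}"
      then obtain p q r where b: "b = [p,q,r]" "p + q + r = k"
        by (auto simp: numeral_3_eq_3 length_Suc_conv)
      show "b \<in> Sl k \<union> {[k,0,0],[0,k,0],[0,0,k]}"
      proof (cases "p < k \<and> q < k \<and> r < k")
        case True then show ?thesis using b by (auto simp: Sl_def)
      next
        case False then show ?thesis using b by auto
      qed
    qed
    show "Sl k \<union> {[k,0,0],[0,k,0],[0,0,k]} \<subseteq> {xs. length xs = 3 \<and> sum_list xs = k}"
      by (auto simp: Sl_def)
  qed
  have disj: "Sl k \<inter> {[k,0,0],[0,k,0],[0,0,k]} = {}" by (auto simp: Sl_def)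
  have "conv (conv x x) x k = (\<Sum>xs\<in>Sl k. prod_list (map x xs)) + (\<Sum>xs\<in>{[k,0,0],[0,k,0],[0,0,k]}. prod_list (map x xs))"
    unfolding conv3_lists eq by (rule sum.union_disjoint[OF Sl_finite _ disj]) simp
  also have "(\<Sum>xs\<in>{[k,0,0],[0,k,0],[0,0,k]}. prod_list (map x xs)) = 3 * x 0 ^ 2 * x k"
    using assms by (simp add: power2_eq_square)
  finally show ?thesis by (simp add: Ncoef_lists)
qed

lemma conv3_0: "conv (conv x x) x 0 = x 0 ^ 3"
  by (simp add: conv_def power3_eq_cube)


definition cc :: "(nat \<Rightarrow> int) \<Rightarrow> (nat \<Rightarrow> int) \<Rightarrow> nat \<Rightarrow> int" where
  "cc a x k = (if k = 0 then x 0 ^ 3 + a 0 * x 0 else Lterm a x k)"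

lemma trunc_Suc: "trunc3 f (Suc n) = trunc3 f n + f n * 3 ^ n"
  by (simp add: trunc3_def)

lemma step_c: "conv (conv x x) x n + conv a x n - cc a x n =
   (if n = 0 then 0 else 3 * x 0 ^ 2 * x n - (if n \<ge> 2 then x 0 ^ 2 * x (n - 1) else 0))"
proof (cases "n = 0")
  case True then show ?thesis by (simp add: conv3_0 cc_def conv_def power3_eq_cube)
next
  case False
  have "conv a x n = (\<Sum>i\<le>n. x (n - i) * a i)" by (simp add: conv_def mult.commute)
  then show ?thesis using False conv3_Ncoef[of n x] by (simp add: cc_def Lterm_def)
qed

lemma D_formula: "trunc3 (conv (conv x x) x) n + trunc3 (conv a x) n - trunc3 (cc a x) n =
   (if n \<ge> 2 then x 0 ^ 2 * x (n - 1) * 3 ^ n else 0)"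
proof (induction n)
  case 0 then show ?case by (simp add: trunc3_def)
next
  case (Suc n)
  have "trunc3 (conv (conv x x) x) (Suc n) + trunc3 (conv a x) (Suc n) - trunc3 (cc a x) (Suc n)
     = (trunc3 (conv (conv x x) x) n + trunc3 (conv a x) n - trunc3 (cc a x) n)
       + (conv (conv x x) x n + conv a x n - cc a x n) * 3 ^ n"
    unfolding trunc_Suc by (simp add: algebra_simps)
  also have "\<dots> = (if Suc n \<ge> 2 then x 0 ^ 2 * x n * 3 ^ Suc n else 0)"
    unfolding Suc.IH step_c
    by (cases "n = 0"; cases "n = 1") (auto simp: algebra_simps)
  finally show ?case by simp
qed

lemma poly_cong: "[trunc3 x n ^ 3 + trunc3 a n * trunc3 x n = trunc3 (cc a x) n] (mod 3 ^ n)"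
proof -
  have "[trunc3 x n * trunc3 x n * trunc3 x n = trunc3 (conv x x) n * trunc3 x n] (mod 3 ^ n)"
    by (rule cong_mult[OF trunc_mult cong_refl])
  also have "[trunc3 (conv x x) n * trunc3 x n = trunc3 (conv (conv x x) x) n] (mod 3 ^ n)"
    by (rule trunc_mult)
  finally have h1: "[trunc3 x n ^ 3 = trunc3 (conv (conv x x) x) n] (mod 3 ^ n)"
    by (simp add: power3_eq_cube)
  have h2: "[trunc3 x n ^ 3 + trunc3 a n * trunc3 x n = trunc3 (conv (conv x x) x) n + trunc3 (conv a x) n] (mod 3 ^ n)"
    by (rule cong_add[OF h1 trunc_mult])
  have h3: "[trunc3 (conv (conv x x) x) n + trunc3 (conv a x) n = trunc3 (cc a x) n] (mod 3 ^ n)"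
    unfolding cong_iff_dvd_diff D_formula by simp
  show ?thesis by (rule cong_trans[OF h2 h3])
qed

lemma Mstep: "Mseq a b x (Suc k) = (cc a x k + Mseq a b x k - b k) div 3"
  by (cases k) (simp_all add: cc_def)

lemma carry:
  assumes "\<forall>j<n. [cc a x j + Mseq a b x j = b j] (mod 3)"
  shows "trunc3 (cc a x) n - trunc3 b n = 3 ^ n * Mseq a b x n"
  using assms
proof (induction n)
  case 0 then show ?case by (simp add: trunc3_def)
next
  case (Suc n)
  have IH: "trunc3 (cc a x) n - trunc3 b n = 3 ^ n * Mseq a b x n" using Suc by simp
  have "(3::int) dvd cc a x n + Mseq a b x n - b n" using Suc.prems cong_iff_dvd_diff by auto
  then have d: "cc a x n + Mseq a b x n - b n = 3 * Mseq a b x (Suc n)" unfolding Mstep by simp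
  have "trunc3 (cc a x) (Suc n) - trunc3 b (Suc n) = 3 ^ n * (cc a x n + Mseq a b x n - b n)"
    unfolding trunc_Suc using IH by (simp add: algebra_simps)
  also have "\<dots> = 3 ^ Suc n * Mseq a b x (Suc n)" unfolding d by simp
  finally show ?case .
qed

lemma carry_conv:
  assumes "\<forall>n. [trunc3 (cc a x) n = trunc3 b n] (mod 3 ^ n)"
  shows "[cc a x k + Mseq a b x k = b k] (mod 3)"
proof (induction k rule: less_induct)
  case (less k)
  have e: "trunc3 (cc a x) k - trunc3 b k = 3 ^ k * Mseq a b x k"
    using carry[of k] less by blast
  have "(3::int) ^ Suc k dvd trunc3 (cc a x) (Suc k) - trunc3 b (Suc k)"
    using assms cong_iff_dvd_diff by blast
  also have "trunc3 (cc a x) (Suc k) - trunc3 b (Suc k) = 3 ^ k * (cc a x k + Mseq a b x k - b k)"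
    unfolding trunc_Suc using e by (simp add: algebra_simps)
  finally have "(3::int) ^ k * 3 dvd 3 ^ k * (cc a x k + Mseq a b x k - b k)" by (simp add: mult.commute)
  then have "(3::int) dvd cc a x k + Mseq a b x k - b k" by (subst (asm) dvd_mult_cancel_left) simp
  then show ?case by (simp add: cong_iff_dvd_diff)
qed

theorem theorem3p1:
  fixes a b x :: "nat \<Rightarrow> int"
  assumes ha: "unit_digits3 a" and hb: "unit_digits3 b"
    and ha0: "a 0 = 1"
    and hx: "unit_digits3 x"
  shows "cubic_solution3 a b x \<longleftrightarrow>
    ([x 0 ^ 3 + a 0 * x 0 = b 0] (mod 3) \<and>
     (\<forall>k\<ge>1. [Lterm a x k + Mseq a b x k = b k] (mod 3)))"
proof -
  have s1: "cubic_solution3 a b x \<longleftrightarrow> (\<forall>n. [trunc3 (cc a x) n = trunc3 b n] (mod 3 ^ n))"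
    unfolding cubic_solution3_def
  proof (intro iff_allI)
    fix n
    show "[trunc3 x n ^ 3 + trunc3 a n * trunc3 x n = trunc3 b n] (mod 3 ^ n) \<longleftrightarrow>
          [trunc3 (cc a x) n = trunc3 b n] (mod 3 ^ n)"
      using poly_cong[of x n a] by (meson cong_sym cong_trans)
  qed
  have s2: "(\<forall>n. [trunc3 (cc a x) n = trunc3 b n] (mod 3 ^ n)) \<longleftrightarrow>
            (\<forall>k. [cc a x k + Mseq a b x k = b k] (mod 3))"
  proof
    assume "\<forall>n. [trunc3 (cc a x) n = trunc3 b n] (mod 3 ^ n)"
    then show "\<forall>k. [cc a x k + Mseq a b x k = b k] (mod 3)" using carry_conv by blast
  next
    assume A: "\<forall>k. [cc a x k + Mseq a b x k = b k] (mod 3)"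
    show "\<forall>n. [trunc3 (cc a x) n = trunc3 b n] (mod 3 ^ n)"
    proof
      fix n
      have "trunc3 (cc a x) n - trunc3 b n = 3 ^ n * Mseq a b x n" using carry A by blast
      then show "[trunc3 (cc a x) n = trunc3 b n] (mod 3 ^ n)" unfolding cong_iff_dvd_diff by simp
    qed
  qed
  have s3: "(\<forall>k. [cc a x k + Mseq a b x k = b k] (mod 3)) \<longleftrightarrow>
    ([x 0 ^ 3 + a 0 * x 0 = b 0] (mod 3) \<and> (\<forall>k\<ge>1. [Lterm a x k + Mseq a b x k = b k] (mod 3)))"
  proof
    assume A: "\<forall>k. [cc a x k + Mseq a b x k = b k] (mod 3)"
    show "[x 0 ^ 3 + a 0 * x 0 = b 0] (mod 3) \<and> (\<forall>k\<ge>1. [Lterm a x k + Mseq a b x k = b k] (mod 3))"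
    proof
      show "[x 0 ^ 3 + a 0 * x 0 = b 0] (mod 3)" using A[rule_format, of 0] by (simp add: cc_def)
      show "\<forall>k\<ge>1. [Lterm a x k + Mseq a b x k = b k] (mod 3)"
      proof (intro allI impI)
        fix k :: nat assume "k \<ge> 1"
        then show "[Lterm a x k + Mseq a b x k = b k] (mod 3)" using A[rule_format, of k] by (simp add: cc_def)
      qed
    qed
  next
    assume A: "[x 0 ^ 3 + a 0 * x 0 = b 0] (mod 3) \<and> (\<forall>k\<ge>1. [Lterm a x k + Mseq a b x k = b k] (mod 3))"
    show "\<forall>k. [cc a x k + Mseq a b x k = b k] (mod 3)"
    proof
      fix k show "[cc a x k + Mseq a b x k = b k] (mod 3)"
        using A by (cases "k = 0") (auto simp: cc_def)
    qed
  qed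
  show ?thesis using s1 s2 s3 by simp
qed

end
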